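(* Let $\lambda\in\mathbb{R}$ and define, for $x>0$, $$f_\lambda(x)=[\psi'(x)]^2+\psi''(x)-\frac{x^2+\lambda x+12}{12x^4(x+1)^2}.$$ Then $f_\lambda$ is completely monotonic on $(0,\infty)$ if and only if $\lambda\le 0$.
   Context: $\Gamma$ is Euler's gamma function, $\psi=\Gamma'/\Gamma$ is the digamma function, and $\psi',\psi''$ are its first and second derivatives (tri- and tetragamma functions). A function $f$ is completely monotonic on an interval $I$ if $f$ has derivatives of all orders on $I$ and $0\le(-1)^n f^{(n)}(x)<\infty$ for all $x\in I$ and all integers $n\ge0$. *)

theory Defs
  imports "HOL-Analysis.Analysis"
begin

definition completely_monotonic_on :: "(real \<Rightarrow> real) \<Rightarrow> real set \<Rightarrow> bool" where
  "completely_monotonic_on f I \<longleftrightarrow>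
     (\<exists>D :: nat \<Rightarrow> real \<Rightarrow> real.
        (\<forall>x\<in>I. D 0 x = f x) \<and>
        (\<forall>n. \<forall>x\<in>I. (D n has_real_derivative D (Suc n) x) (at x)) \<and>
        (\<forall>n. \<forall>x\<in>I. 0 \<le> (-1) ^ n * D n x))"

definition f_lambda :: "real \<Rightarrow> real \<Rightarrow> real" where
  "f_lambda lam x = (Polygamma 1 x)\<^sup>2 + Polygamma 2 x
      - (x\<^sup>2 + lam * x + 12) / (12 * x ^ 4 * (x + 1)\<^sup>2)"

end

theory Submission imports Defs begin

lemma leibniz_step:
  fixes a b :: "nat \<Rightarrow> real"
  shows "(\<Sum>k\<le>Suc n. real (Suc n choose k) * a k * b (Suc n - k)) =
         (\<Sum>k\<le>n. real (n choose k) * (a (Suc k) * b (n - k) + a k * b (Suc (n - k))))"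
proof -
  have 1: "(\<Sum>k\<le>n. real (n choose k) * a k * b (Suc (n-k))) =
      a 0 * b (Suc n) + (\<Sum>k\<le>n. real (n choose Suc k) * a (Suc k) * b (n-k))"
  proof -
    have "(\<Sum>k\<le>n. real (n choose k) * a k * b (Suc (n-k))) =
          (\<Sum>k\<le>Suc n. real (n choose k) * a k * b (Suc n - k))"
      by (simp add: Suc_diff_le)
    also have "\<dots> = a 0 * b (Suc n) + (\<Sum>k\<le>n. real (n choose Suc k) * a (Suc k) * b (n-k))"
      by (subst sum.atMost_Suc_shift) simp
    finally show ?thesis .
  qed
  have "(\<Sum>k\<le>Suc n. real (Suc n choose k) * a k * b (Suc n - k)) =
        a 0 * b (Suc n) + (\<Sum>k\<le>n. (real (n choose k) + real (n choose Suc k)) * a (Suc k) * b (n - k))"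
    by (subst sum.atMost_Suc_shift) simp
  also have "\<dots> = (\<Sum>k\<le>n. real (n choose k) * a (Suc k) * b (n - k)) +
        (a 0 * b (Suc n) + (\<Sum>k\<le>n. real (n choose Suc k) * a (Suc k) * b (n-k)))"
    by (simp add: distrib_right sum.distrib)
  also have "\<dots> = (\<Sum>k\<le>n. real (n choose k) * a (Suc k) * b (n - k)) +
        (\<Sum>k\<le>n. real (n choose k) * a k * b (Suc (n-k)))"
    using 1 by simp
  also have "\<dots> = (\<Sum>k\<le>n. real (n choose k) * (a (Suc k) * b (n - k) + a k * b (Suc (n - k))))"
    by (simp add: distrib_left sum.distrib mult.assoc)
  finally show ?thesis .
qed

definition dseq :: "(nat \<Rightarrow> real \<Rightarrow> real) \<Rightarrow> bool" where
  "dseq D \<longleftrightarrow> (\<forall>n. \<forall>x>0. (D n has_real_derivative D (Suc n) x) (at x))"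
definition cms :: "(nat \<Rightarrow> real \<Rightarrow> real) \<Rightarrow> bool" where
  "cms D \<longleftrightarrow> (\<forall>n. \<forall>x>0. 0 \<le> (-1) ^ n * D n x)"
definition van :: "(nat \<Rightarrow> real \<Rightarrow> real) \<Rightarrow> bool" where
  "van D \<longleftrightarrow> (\<forall>n. \<forall>x>0. (\<lambda>N. D n (x + real N)) \<longlonglongrightarrow> 0)"

definition mul :: "(nat \<Rightarrow> real \<Rightarrow> real) \<Rightarrow> (nat \<Rightarrow> real \<Rightarrow> real) \<Rightarrow> nat \<Rightarrow> real \<Rightarrow> real" where
  "mul A B n x = (\<Sum>k\<le>n. real (n choose k) * A k x * B (n - k) x)"
definition add :: "(nat \<Rightarrow> real \<Rightarrow> real) \<Rightarrow> (nat \<Rightarrow> real \<Rightarrow> real) \<Rightarrow> nat \<Rightarrow> real \<Rightarrow> real" where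
  "add A B n x = A n x + B n x"
definition scl :: "real \<Rightarrow> (nat \<Rightarrow> real \<Rightarrow> real) \<Rightarrow> nat \<Rightarrow> real \<Rightarrow> real" where
  "scl c A n x = c * A n x"
definition shf :: "real \<Rightarrow> (nat \<Rightarrow> real \<Rightarrow> real) \<Rightarrow> nat \<Rightarrow> real \<Rightarrow> real" where
  "shf c A n x = A n (x + c)"
definition bas :: "nat \<Rightarrow> nat \<Rightarrow> real \<Rightarrow> real" where
  "bas k n x = (-1) ^ n * pochhammer (real k) n / x ^ (k + n)"
definition PG :: "nat \<Rightarrow> nat \<Rightarrow> real \<Rightarrow> real" where
  "PG m n x = Polygamma (m + n) x"

lemma mul0 [simp]: "mul A B 0 x = A 0 x * B 0 x" by (simp add: mul_def)
lemma add0 [simp]: "add A B n x = A n x + B n x" by (simp add: add_def)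
lemma scl0 [simp]: "scl c A n x = c * A n x" by (simp add: scl_def)
lemma shf0 [simp]: "shf c A n x = A n (x + c)" by (simp add: shf_def)
lemma bas0 [simp]: "bas k 0 x = 1 / x ^ k" by (simp add: bas_def)
lemma PG0 [simp]: "PG m 0 x = Polygamma m x" by (simp add: PG_def)

lemma dseq_add: "dseq A \<Longrightarrow> dseq B \<Longrightarrow> dseq (add A B)"
  unfolding dseq_def add_def by (auto intro!: derivative_eq_intros)
lemma dseq_scl: "dseq A \<Longrightarrow> dseq (scl c A)"
  unfolding dseq_def scl_def by (auto intro!: derivative_eq_intros)
lemma dseq_shf: assumes "dseq A" "c \<ge> 0" shows "dseq (shf c A)"
  unfolding dseq_def shf_def
proof (intro allI impI)
  fix n and x :: real assume x: "x > 0"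
  have "(A n has_real_derivative A (Suc n) (x + c)) (at (x + c))"
    using assms x unfolding dseq_def by auto
  then show "((\<lambda>x. A n (x + c)) has_real_derivative A (Suc n) (x + c)) (at x)"
    using DERIV_shift[of "A n" "A (Suc n) (x + c)" x c] by (simp add: add.commute)
qed
lemma dseq_mul: assumes "dseq A" "dseq B" shows "dseq (mul A B)"
  unfolding dseq_def
proof (intro allI impI)
  fix n and x :: real assume x: "x > 0"
  have dA: "\<And>k. (A k has_real_derivative A (Suc k) x) (at x)"
   and dB: "\<And>k. (B k has_real_derivative B (Suc k) x) (at x)"
    using assms x unfolding dseq_def by auto
  have "((\<lambda>x. \<Sum>k\<le>n. real (n choose k) * A k x * B (n - k) x) has_real_derivative
        (\<Sum>k\<le>n. real (n choose k) * (A (Suc k) x * B (n - k) x + A k x * B (Suc (n - k)) x))) (at x)"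
    by (rule derivative_eq_intros refl dA dB | simp add: algebra_simps)+
  also have "(\<Sum>k\<le>n. real (n choose k) * (A (Suc k) x * B (n - k) x + A k x * B (Suc (n - k)) x))
      = mul A B (Suc n) x"
    unfolding mul_def using leibniz_step[of n "\<lambda>k. A k x" "\<lambda>k. B k x"] by simp
  finally show "(mul A B n has_real_derivative mul A B (Suc n) x) (at x)"
    by (simp add: mul_def[abs_def])
qed

lemma cms_add: "cms A \<Longrightarrow> cms B \<Longrightarrow> cms (add A B)"
  unfolding cms_def add_def by (auto simp: distrib_left intro!: add_nonneg_nonneg)
lemma cms_scl: "cms A \<Longrightarrow> c \<ge> 0 \<Longrightarrow> cms (scl c A)"
  unfolding cms_def scl_def
  by (auto simp: mult.left_commute[of "(-1)^_"] intro!: mult_nonneg_nonneg)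
lemma cms_shf: "cms A \<Longrightarrow> c \<ge> 0 \<Longrightarrow> cms (shf c A)"
  unfolding cms_def shf_def by auto
lemma cms_mul: assumes "cms A" "cms B" shows "cms (mul A B)"
  unfolding cms_def
proof (intro allI impI)
  fix n and x :: real assume x: "x > 0"
  have "(-1) ^ n * mul A B n x = (\<Sum>k\<le>n. real (n choose k) * ((-1)^k * A k x) * ((-1)^(n-k) * B (n - k) x))"
    unfolding mul_def sum_distrib_left
  proof (rule sum.cong)
    fix k assume "k \<in> {..n}"
    then have "(-1::real)^n = (-1)^k * (-1)^(n-k)" by (simp add: power_add[symmetric])
    then show "(-1) ^ n * (real (n choose k) * A k x * B (n - k) x) =
       real (n choose k) * ((-1) ^ k * A k x) * ((-1) ^ (n - k) * B (n - k) x)" by simp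
  qed simp
  also have "\<dots> \<ge> 0"
  proof (rule sum_nonneg)
    fix k assume "k \<in> {..n}"
    have a: "0 \<le> (-1)^k * A k x" and b: "0 \<le> (-1)^(n-k) * B (n-k) x"
      using assms x unfolding cms_def by auto
    show "0 \<le> real (n choose k) * ((-1)^k * A k x) * ((-1)^(n-k) * B (n - k) x)"
      using a b by simp
  qed
  finally show "0 \<le> (-1) ^ n * mul A B n x" .
qed

lemma deriv_invpow:
  assumes x: "x > (0::real)"
  shows "((\<lambda>x. 1 / x ^ m) has_real_derivative - real m / x ^ Suc m) (at x)"
proof (cases m)
  case 0 then show ?thesis by (auto intro!: derivative_eq_intros)
next
  case (Suc j)
  have "((\<lambda>x. inverse (x ^ m)) has_real_derivative
      - (inverse (x ^ m) * (real m * x ^ (m - Suc 0)) * inverse (x ^ m))) (at x)"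
    by (rule DERIV_inverse'[OF DERIV_pow]) (use x in simp)
  then have "((\<lambda>x. inverse (x ^ m)) has_real_derivative
      - (inverse (x ^ m) * (real m * x ^ j) * inverse (x ^ m))) (at x)" using Suc by simp
  moreover have "- (inverse (x ^ m) * (real m * x ^ j) * inverse (x ^ m)) = - real m / x ^ Suc m"
    using x Suc by (simp add: field_simps)
  ultimately show ?thesis by (simp add: inverse_eq_divide)
qed

lemma dseq_bas: "dseq (bas k)"
  unfolding dseq_def
proof (intro allI impI)
  fix n and x :: real assume x: "x > 0"
  have "((\<lambda>x. (-1) ^ n * pochhammer (real k) n * (1 / x ^ (k + n))) has_real_derivative
      (-1) ^ n * pochhammer (real k) n * (- real (k + n) / x ^ Suc (k + n))) (at x)"
    by (intro DERIV_cmult deriv_invpow x)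
  moreover have "(-1) ^ n * pochhammer (real k) n * (- real (k + n) / x ^ Suc (k + n)) = bas k (Suc n) x"
    unfolding bas_def by (simp add: pochhammer_Suc field_simps)
  ultimately show "(bas k n has_real_derivative bas k (Suc n) x) (at x)"
    unfolding bas_def[abs_def] by simp
qed
lemma cms_bas: "k > 0 \<Longrightarrow> cms (bas k)"
  unfolding cms_def bas_def
  by (auto intro!: divide_nonneg_pos pochhammer_nonneg simp: power_mult_distrib[symmetric])


lemma telescope:
  assumes F: "dseq F" and H: "dseq H" "cms H"
    and eq: "\<And>x. x > 0 \<Longrightarrow> F 0 x - F 0 (x + 1) = H 0 x" and v: "van F"
  shows "cms F"
proof -
  define E where "E n x = F n x - F n (x + 1) - H n x" for n x
  have dE: "(E n has_real_derivative E (Suc n) x) (at x)" if "x > 0" for n x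
  proof -
    have "(F n has_real_derivative F (Suc n) x) (at x)" using F that unfolding dseq_def by auto
    moreover have "((\<lambda>y. F n (y + 1)) has_real_derivative F (Suc n) (x + 1)) (at x)"
      using dseq_shf[OF F, of 1] that unfolding dseq_def shf_def by auto
    moreover have "(H n has_real_derivative H (Suc n) x) (at x)" using H that unfolding dseq_def by auto
    ultimately show ?thesis unfolding E_def[abs_def] by (auto intro!: derivative_eq_intros)
  qed
  have E0: "\<forall>x>0. E n x = 0" for n
  proof (induction n)
    case 0 then show ?case using eq by (simp add: E_def)
  next
    case (Suc n)
    show ?case
    proof (intro allI impI)
      fix x :: real assume x: "x > 0"
      have "((\<lambda>y. 0) has_real_derivative 0) (at x)" by simp
      then have "(E n has_real_derivative 0) (at x)"
        by (rule has_field_derivative_transform_within_open[where S="{0<..}"]) (use x Suc in auto)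
      with dE[OF x, of n] show "E (Suc n) x = 0" by (rule DERIV_unique)
    qed
  qed
  show ?thesis unfolding cms_def
  proof (intro allI impI)
    fix n and x :: real assume x: "x > 0"
    have tel: "F n x = (\<Sum>k<N. H n (x + real k)) + F n (x + real N)" for N
    proof (induction N)
      case (Suc N)
      have "E n (x + real N) = 0" using E0 x by (simp add: add_pos_nonneg)
      then have e: "F n (x + real N) = H n (x + real N) + F n (x + real N + 1)"
        unfolding E_def by simp
      show ?case using Suc e by (simp add: ac_simps)
    qed simp
    have "(\<lambda>N. (-1)^n * F n (x + real N)) \<longlonglongrightarrow> (-1)^n * 0"
      using v x unfolding van_def by (intro tendsto_mult tendsto_const) auto
    moreover have "\<exists>N0. \<forall>N\<ge>N0. (-1)^n * F n (x + real N) \<le> (-1)^n * F n x"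
    proof (intro exI allI impI)
      fix N :: nat
      have "0 \<le> (\<Sum>k<N. (-1)^n * H n (x + real k))"
        using H(2) x unfolding cms_def by (intro sum_nonneg) (auto simp: add_pos_nonneg)
      then show "(-1)^n * F n (x + real N) \<le> (-1)^n * F n x"
        using tel[of N] by (simp add: distrib_left sum_distrib_left)
    qed
    ultimately show "0 \<le> (-1)^n * F n x" using LIMSEQ_le_const2 by fastforce
  qed
qed

lemma van_add: "van A \<Longrightarrow> van B \<Longrightarrow> van (add A B)"
  unfolding van_def add_def by (auto intro!: tendsto_eq_intros)
lemma van_scl: "van A \<Longrightarrow> van (scl c A)"
  unfolding van_def scl_def by (auto intro!: tendsto_eq_intros)
lemma van_shf: "van A \<Longrightarrow> c \<ge> 0 \<Longrightarrow> van (shf c A)"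
  unfolding van_def shf_def
proof (intro allI impI)
  fix n and x :: real assume "\<forall>n x. 0 < x \<longrightarrow> (\<lambda>N. A n (x + real N)) \<longlonglongrightarrow> 0" "c \<ge> 0" "x > 0"
  then have "(\<lambda>N. A n ((x + c) + real N)) \<longlonglongrightarrow> 0" by auto
  then show "(\<lambda>N. A n (x + real N + c)) \<longlonglongrightarrow> 0" by (simp add: ac_simps)
qed
lemma van_mul: "van A \<Longrightarrow> van B \<Longrightarrow> van (mul A B)"
  unfolding van_def mul_def
proof (intro allI impI)
  fix n and x :: real
  assume a: "\<forall>n x. 0 < x \<longrightarrow> (\<lambda>N. A n (x + real N)) \<longlonglongrightarrow> 0"
    and b: "\<forall>n x. 0 < x \<longrightarrow> (\<lambda>N. B n (x + real N)) \<longlonglongrightarrow> 0" and x: "x > 0"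
  have "(\<lambda>N. \<Sum>k\<le>n. real (n choose k) * A k (x + real N) * B (n - k) (x + real N)) \<longlonglongrightarrow>
        (\<Sum>k\<le>n. real (n choose k) * 0 * 0)"
    using a b x by (intro tendsto_sum tendsto_mult tendsto_const) auto
  then show "(\<lambda>N. \<Sum>k\<le>n. real (n choose k) * A k (x + real N) * B (n - k) (x + real N)) \<longlonglongrightarrow> 0"
    by simp
qed
lemma van_bas: "k > 0 \<Longrightarrow> van (bas k)"
  unfolding van_def bas_def
proof (intro allI impI)
  fix n and x :: real assume k: "k > 0" and x: "x > 0"
  have "LIM N sequentially. x + real N :> at_top"
    by (rule filterlim_tendsto_add_at_top[OF tendsto_const filterlim_real_sequentially])
  then have "LIM N sequentially. (x + real N) ^ (k + n) :> at_top"
    using k by (intro filterlim_pow_at_top) auto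
  then have "(\<lambda>N. inverse ((x + real N) ^ (k + n))) \<longlonglongrightarrow> 0"
    by (rule tendsto_inverse_0_at_top)
  then have "(\<lambda>N. (-1) ^ n * pochhammer (real k) n * inverse ((x + real N) ^ (k + n))) \<longlonglongrightarrow>
       (-1) ^ n * pochhammer (real k) n * 0"
    by (intro tendsto_mult tendsto_const)
  then show "(\<lambda>N. (-1) ^ n * pochhammer (real k) n / (x + real N) ^ (k + n)) \<longlonglongrightarrow> 0"
    by (simp add: divide_inverse)
qed

lemma Polygamma_tendsto_0:
  assumes x: "(x::real) > 0" and m: "m > 0"
  shows "(\<lambda>N. Polygamma m (x + real N)) \<longlonglongrightarrow> 0"
proof -
  have s: "(\<lambda>k. inverse ((x + of_nat k)^Suc m)) sums ((-1) ^ Suc m * Polygamma m x / fact m)"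
    using x m by (intro Polygamma_LIMSEQ) auto
  then have "(\<lambda>N. \<Sum>k<N. 1 / (x + of_nat k)^Suc m) \<longlonglongrightarrow> ((-1) ^ Suc m * Polygamma m x / fact m)"
    by (simp add: sums_def inverse_eq_divide)
  then have "(\<lambda>N. Polygamma m x + (-1)^m * fact m * (\<Sum>k<N. 1 / (x + of_nat k)^Suc m)) \<longlonglongrightarrow>
      Polygamma m x + (-1)^m * fact m * ((-1) ^ Suc m * Polygamma m x / fact m)"
    by (intro tendsto_intros)
  moreover have "Polygamma m x + (-1)^m * fact m * ((-1) ^ Suc m * Polygamma m x / fact m) = 0"
    by (simp add: power_add[symmetric] flip: mult.assoc)
  moreover have "Polygamma m (x + real N) = Polygamma m x + (-1)^m * fact m * (\<Sum>k<N. 1 / (x + of_nat k)^Suc m)" for N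
    using x by (intro Polygamma_plus_of_nat) auto
  ultimately show ?thesis by simp
qed

lemma dseq_PG: "dseq (PG m)"
  unfolding dseq_def PG_def
proof (intro allI impI)
  fix n and x :: real assume x: "x > 0"
  have "x \<notin> \<int>\<^sub>\<le>\<^sub>0" using x by (auto elim!: nonpos_Ints_cases)
  then show "((\<lambda>x. Polygamma (m + n) x) has_real_derivative Polygamma (m + Suc n) x) (at x)"
    using has_field_derivative_Polygamma[of x "m+n" UNIV] by simp
qed
lemma van_PG: "m > 0 \<Longrightarrow> van (PG m)"
  unfolding van_def PG_def by (auto intro!: Polygamma_tendsto_0)


definition "DP = add (bas 1) (add (scl (1/2) (bas 2)) (add (scl (1/6) (bas 3)) (scl (-1/30) (bas 5))))"
definition "DG = add (PG 1) (scl (-1) DP)"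
definition "HG = add (scl (1/30) (mul (bas 5) (shf 1 (bas 5))))
   (add (scl (1/6) (mul (bas 4) (shf 1 (bas 5)))) (scl (1/6) (mul (bas 3) (shf 1 (bas 5)))))"

lemma dseq_DP: "dseq DP" unfolding DP_def by (intro dseq_add dseq_scl dseq_bas)
lemma van_DP: "van DP" unfolding DP_def by (intro van_add van_scl van_bas) auto
lemma dseq_DG: "dseq DG" unfolding DG_def by (intro dseq_add dseq_scl dseq_PG dseq_DP)
lemma van_DG: "van DG" unfolding DG_def by (intro van_add van_scl van_PG van_DP) auto
lemma dseq_HG: "dseq HG" unfolding HG_def by (intro dseq_add dseq_scl dseq_mul dseq_shf dseq_bas) auto
lemma cms_HG: "cms HG" unfolding HG_def by (intro cms_add cms_scl cms_mul cms_shf cms_bas) auto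

lemma Poly1_rec: "(x::real) > 0 \<Longrightarrow> Polygamma 1 x = Polygamma 1 (x + 1) + 1 / x^2"
  using Polygamma_plus1[of x 1] by (simp add: power2_eq_square)
lemma Poly2_rec: "(x::real) > 0 \<Longrightarrow> Polygamma 2 x = Polygamma 2 (x + 1) - 2 / x^3"
  using Polygamma_plus1[of x 2] by (simp add: numeral_eq_Suc)

definition Pf :: "real \<Rightarrow> real" where
  "Pf y = 1/y + 1/(2*y^2) + 1/(6*y^3) - 1/(30*y^5)"

lemma DG0: "DG 0 y = Polygamma 1 y - Pf y"
  unfolding DG_def DP_def Pf_def by (simp add: power2_eq_square)
lemma HG0: "HG 0 y = 1/30 * (1/y^5 * (1/(y+1)^5)) + (1/6 * (1/y^4 * (1/(y+1)^5)) + 1/6 * (1/y^3 * (1/(y+1)^5)))"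
  unfolding HG_def by simp

lemma cms_DG: "cms DG"
proof (rule telescope[OF dseq_DG dseq_HG cms_HG _ van_DG])
  fix x :: real assume x: "x > 0"
  have alg: "u^2 - (u + 1/(2) * u^2 + 1/6 * u^3 - 1/30 * u^5) + (v + 1/2 * v^2 + 1/6 * v^3 - 1/30 * v^5)
     = 1/30 * (u^5 * v^5) + (1/6 * (u^4 * v^5) + 1/6 * (u^3 * v^5))"
    if "x * u = 1" "(x + 1) * v = 1" for u v :: real
    using that by algebra
  have r: "1/x^2 - Pf x + Pf (x + 1) = 1/30 * (1/x^5 * (1/(x+1)^5)) + (1/6 * (1/x^4 * (1/(x+1)^5)) + 1/6 * (1/x^3 * (1/(x+1)^5)))"
    using alg[of "1/x" "1/(x+1)"] x unfolding Pf_def by (simp add: power_one_over)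
  show "DG 0 x - DG 0 (x + 1) = HG 0 x"
    unfolding DG0 HG0 Poly1_rec[OF x] using r by simp
qed


definition "DR = add (mul (bas 2) (shf 1 (bas 2))) (scl 12 (mul (bas 4) (shf 1 (bas 2))))"
definition "Df0 = add (mul (PG 1) (PG 1)) (add (PG 2) (scl (-1/12) DR))"
definition "Mq = mul (shf 1 (bas 5)) (shf 2 (bas 2))"
definition "DL = add (scl (11/15) (mul (bas 2) Mq)) (add (scl (12/5) (mul (bas 1) Mq))
   (add (scl (8/5) Mq) (scl (5/3) (mul (shf 1 (bas 4)) (shf 2 (bas 2))))))"
definition "Hf0 = add (scl 2 (mul (shf 1 DG) (bas 2))) DL"

lemma dseq_DR: "dseq DR" unfolding DR_def by (intro dseq_add dseq_scl dseq_mul dseq_shf dseq_bas) auto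
lemma van_DR: "van DR" unfolding DR_def by (intro van_add van_scl van_mul van_shf van_bas) auto
lemma dseq_Df0: "dseq Df0" unfolding Df0_def by (intro dseq_add dseq_scl dseq_mul dseq_PG dseq_DR)
lemma van_Df0: "van Df0" unfolding Df0_def by (intro van_add van_scl van_mul van_PG van_DR) auto
lemma dseq_Hf0: "dseq Hf0" unfolding Hf0_def DL_def Mq_def
  by (intro dseq_add dseq_scl dseq_mul dseq_shf dseq_bas dseq_DG) auto
lemma cms_Hf0: "cms Hf0" unfolding Hf0_def DL_def Mq_def
  by (intro cms_add cms_scl cms_mul cms_shf cms_bas cms_DG) auto

lemma cms_Df0: "cms Df0"
proof (rule telescope[OF dseq_Df0 dseq_Hf0 cms_Hf0 _ van_Df0])
  fix x :: real assume x: "x > 0"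
  have alg: "(a + u^2)^2 + (b - 2 * u^3) + - 1 / 12 * (u^2 * v^2 + 12 * (u^4 * v^2))
       - (a^2 + b + - 1 / 12 * (v^2 * w^2 + 12 * (v^4 * w^2)))
     = 2 * ((a - (v + 1/2 * v^2 + 1/6 * v^3 - 1/30 * v^5)) * u^2) +
       (11/15 * (u^2 * (v^5 * w^2)) + (12/5 * (u * (v^5 * w^2)) + (8/5 * (v^5 * w^2) + 5/3 * (v^4 * w^2))))"
    if "x * u = 1" "(x + 1) * v = 1" "(x + 2) * w = 1" for u v w a b :: real
    using that by algebra
  have x1: "x + 1 + 1 = x + 2" by simp
  have x2: "2 + x = x + 2" by simp
  have "Df0 0 x = (Polygamma 1 (x+1) + (1/x)^2)^2 + (Polygamma 2 (x+1) - 2 * (1/x)^3)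
       + - 1 / 12 * ((1/x)^2 * (1/(x+1))^2 + 12 * ((1/x)^4 * (1/(x+1))^2))"
    unfolding Df0_def DR_def using Poly1_rec[OF x] Poly2_rec[OF x]
    by (simp add: power_one_over power2_eq_square)
  moreover have "Df0 0 (x + 1) = (Polygamma 1 (x+1))^2 + Polygamma 2 (x+1)
       + - 1 / 12 * ((1/(x+1))^2 * (1/(x+2))^2 + 12 * ((1/(x+1))^4 * (1/(x+2))^2))"
    unfolding Df0_def DR_def x1 by (simp add: power_one_over power2_eq_square x2)
  moreover have "Hf0 0 x = 2 * ((Polygamma 1 (x+1) - ((1/(x+1)) + 1/2 * (1/(x+1))^2 + 1/6 * (1/(x+1))^3 - 1/30 * (1/(x+1))^5)) * (1/x)^2) +
       (11/15 * ((1/x)^2 * ((1/(x+1))^5 * (1/(x+2))^2)) + (12/5 * ((1/x) * ((1/(x+1))^5 * (1/(x+2))^2)) + (8/5 * ((1/(x+1))^5 * (1/(x+2))^2) + 5/3 * ((1/(x+1))^4 * (1/(x+2))^2))))"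
    unfolding Hf0_def DL_def Mq_def by (simp add: DG0 Pf_def power_one_over x1)
  ultimately show "Df0 0 x - Df0 0 (x + 1) = Hf0 0 x"
    using alg[of "1/x" "1/(x+1)" "1/(x+2)" "Polygamma 1 (x+1)" "Polygamma 2 (x+1)"] x by simp
qed


lemma f_lambda_alt:
  assumes x: "x > 0"
  shows "f_lambda lam x = Df0 0 x + (- lam / 12) * (1 / x ^ 3 * (1 / (x + 1) ^ 2))"
proof -
  have alg: "(a + u^2)^2 + (b - 2 * u^3) - (x^2 + lam * x + 12) * (1/12) * u^4 * v^2
     = (a + u^2)^2 + (b - 2 * u^3) + - 1 / 12 * (u^2 * v^2 + 12 * (u^4 * v^2)) + (- lam / 12) * (u^3 * v^2)"
    if "x * u = 1" "(x + 1) * v = 1" for u v a b :: real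
    using that by algebra
  have q: "(x^2 + lam * x + 12) / (12 * x^4 * (x+1)^2) = (x^2 + lam * x + 12) * (1/12) * (1/x)^4 * (1/(x+1))^2"
    by (simp add: power_one_over)
  have "f_lambda lam x = (Polygamma 1 (x+1) + (1/x)^2)^2 + (Polygamma 2 (x+1) - 2 * (1/x)^3)
     - (x^2 + lam * x + 12) * (1/12) * (1/x)^4 * (1/(x+1))^2"
    unfolding f_lambda_def q using Poly1_rec[OF x] Poly2_rec[OF x] by (simp add: power_one_over)
  also have "\<dots> = (Polygamma 1 (x+1) + (1/x)^2)^2 + (Polygamma 2 (x+1) - 2 * (1/x)^3)
       + - 1 / 12 * ((1/x)^2 * (1/(x+1))^2 + 12 * ((1/x)^4 * (1/(x+1))^2)) + (- lam / 12) * ((1/x)^3 * (1/(x+1))^2)"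
    using alg[of "1/x" "1/(x+1)"] x by simp
  also have "\<dots> = Df0 0 x + (- lam / 12) * (1 / x ^ 3 * (1 / (x + 1) ^ 2))"
    unfolding Df0_def DR_def using Poly1_rec[OF x] Poly2_rec[OF x]
    by (simp add: power_one_over power2_eq_square)
  finally show ?thesis .
qed

lemma f_lambda_x3:
  assumes x: "x > 0"
  shows "x^3 * f_lambda lam x = (-37*x - 24*x^2 - lam) / (12*(x+1)^2) + 2 * Polygamma 1 (x+1) * x
      + x^3 * ((Polygamma 1 (x+1))^2 + Polygamma 2 (x+1))"
proof -
  have alg: "x^3 * ((a + u^2)^2 + (b - 2 * u^3) - (x^2 + lam * x + 12) * (1/12) * u^4 * v^2)
     = (-37*x - 24*x^2 - lam) * (1/12) * v^2 + 2 * a * x + x^3 * (a^2 + b)"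
    if "x * u = 1" "(x + 1) * v = 1" for u v a b :: real
    using that by algebra
  have q: "(x^2 + lam * x + 12) / (12 * x^4 * (x+1)^2) = (x^2 + lam * x + 12) * (1/12) * (1/x)^4 * (1/(x+1))^2"
    by (simp add: power_one_over)
  have q2: "(-37*x - 24*x^2 - lam) / (12*(x+1)^2) = (-37*x - 24*x^2 - lam) * (1/12) * (1/(x+1))^2"
    by (simp add: power_one_over)
  have "f_lambda lam x = (Polygamma 1 (x+1) + (1/x)^2)^2 + (Polygamma 2 (x+1) - 2 * (1/x)^3)
     - (x^2 + lam * x + 12) * (1/12) * (1/x)^4 * (1/(x+1))^2"
    unfolding f_lambda_def q using Poly1_rec[OF x] Poly2_rec[OF x] by (simp add: power_one_over)
  then show ?thesis unfolding q2 using alg[of "1/x" "1/(x+1)"] x by simp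
qed

theorem theorem1p1:
  fixes lam :: real
  shows "completely_monotonic_on (f_lambda lam) {0<..} \<longleftrightarrow> lam \<le> 0"
proof
  assume "completely_monotonic_on (f_lambda lam) {0<..}"
  then obtain D where D0: "\<forall>x\<in>{0<..}. D 0 x = f_lambda lam x"
    and Ds: "\<forall>n. \<forall>x\<in>{0<..}. 0 \<le> (-1) ^ n * D n x"
    unfolding completely_monotonic_on_def by blast
  have fpos: "0 \<le> f_lambda lam x" if "x > 0" for x :: real
  proof -
    have "0 \<le> (-1) ^ 0 * D 0 x" using Ds that by blast
    then show ?thesis using D0 that by simp
  qed
  show "lam \<le> 0"
  proof (rule ccontr)
    assume "\<not> lam \<le> 0"
    then have lam: "lam > 0" by simp
    define g where "g x = (-37*x - 24*x^2 - lam) / (12*(x+1)^2) + 2 * Polygamma 1 (x+1) * x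
      + x^3 * ((Polygamma 1 (x+1))^2 + Polygamma 2 (x+1))" for x :: real
    have "(g \<longlongrightarrow> (-37*0 - 24*0^2 - lam) / (12*(0+1)^2) + 2 * Polygamma 1 (0+1) * 0
      + 0^3 * ((Polygamma 1 (0+1))^2 + Polygamma 2 (0+1))) (at_right 0)"
      unfolding g_def by (intro tendsto_intros) auto
    then have "(g \<longlongrightarrow> - lam / 12) (at_right 0)" by simp
    then have "eventually (\<lambda>x. g x < 0) (at_right 0)"
      using lam by (intro order_tendstoD) auto
    moreover have "eventually (\<lambda>x. x > (0::real)) (at_right 0)"
      by (simp add: eventually_at_right_less)
    ultimately have "eventually (\<lambda>x. g x < 0 \<and> x > 0) (at_right (0::real))"
      by (rule eventually_conj)
    then have "at_right (0::real) = bot \<or> (\<exists>x. g x < 0 \<and> x > 0)"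
      by (rule eventually_happens)
    then obtain x :: real where x: "g x < 0" "x > 0"
      using trivial_limit_at_right_real by blast
    have "x^3 * f_lambda lam x = g x" unfolding g_def using f_lambda_x3[OF x(2)] .
    moreover have "0 \<le> x^3 * f_lambda lam x" using fpos[OF x(2)] x(2) by simp
    ultimately show False using x(1) by simp
  qed
next
  assume lam: "lam \<le> 0"
  define D where "D = add Df0 (scl (- lam / 12) (mul (bas 3) (shf 1 (bas 2))))"
  have dD: "dseq D" unfolding D_def
    by (intro dseq_add dseq_scl dseq_mul dseq_shf dseq_bas dseq_Df0) auto
  have cD: "cms D" unfolding D_def using lam
    by (intro cms_add cms_scl cms_mul cms_shf cms_bas cms_Df0) auto
  show "completely_monotonic_on (f_lambda lam) {0<..}"
    unfolding completely_monotonic_on_def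
  proof (intro exI[of _ D] conjI ballI allI)
    fix x :: real assume "x \<in> {0<..}"
    then show "D 0 x = f_lambda lam x" unfolding D_def using f_lambda_alt[of x lam] by simp
  next
    fix n and x :: real assume "x \<in> {0<..}"
    then show "(D n has_real_derivative D (Suc n) x) (at x)" using dD unfolding dseq_def by auto
  next
    fix n and x :: real assume "x \<in> {0<..}"
    then show "0 \<le> (-1) ^ n * D n x" using cD unfolding cms_def by auto
  qed
qed

end
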